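(* Let $D$ be an integral domain, $R=R(D)$, and let $f,g\in D\setminus\{0\}$. The following are equivalent: (1) $\mathfrak p_g\subseteq\mathfrak p_f$; (2) $\sqrt{(\frac1g)R}\subseteq\sqrt{(\frac1f)R}$; (3) there exists $e\ge1$ such that $\frac1{g^e}\in(\frac1f)R$ (equivalently, $\frac f{g^e}\in R$).
   Context: For an integral domain $D$ with fraction field $F$, the reciprocal complement $R(D)$ is the subring of $F$ generated by all $1/d$, $d\in D\setminus\{0\}$. For nonzero $f\in D$, $\mathfrak p_f$ denotes the unique prime ideal of $R(D)$ maximal with respect to not containing $1/f$. $\sqrt I$ denotes the radical of an ideal $I$. *)

theory Defs
  imports "HOL-Computational_Algebra.Fraction_Field"
begin

text \<open>The integral domain D is the type 'a (class idom); its fraction field is 'a fract;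
  d is embedded as Fract d 1.\<close>

definition is_subring :: "'b::comm_ring_1 set \<Rightarrow> bool" where
  "is_subring S \<longleftrightarrow> 1 \<in> S \<and> (\<forall>x\<in>S. \<forall>y\<in>S. x + y \<in> S \<and> - x \<in> S \<and> x * y \<in> S)"

definition recip_compl :: "('a::idom) fract set" where
  "recip_compl = \<Inter> {S. is_subring S \<and> (\<forall>d::'a. d \<noteq> 0 \<longrightarrow> inverse (Fract d 1) \<in> S)}"

definition is_ideal_in :: "'b::comm_ring_1 set \<Rightarrow> 'b set \<Rightarrow> bool" where
  "is_ideal_in I R \<longleftrightarrow> I \<subseteq> R \<and> 0 \<in> I \<and> (\<forall>x\<in>I. \<forall>y\<in>I. x + y \<in> I)
     \<and> (\<forall>x\<in>I. \<forall>r\<in>R. r * x \<in> I)"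

definition is_prime_ideal_in :: "'b::comm_ring_1 set \<Rightarrow> 'b set \<Rightarrow> bool" where
  "is_prime_ideal_in P R \<longleftrightarrow> is_ideal_in P R \<and> P \<noteq> R
     \<and> (\<forall>x\<in>R. \<forall>y\<in>R. x * y \<in> P \<longrightarrow> x \<in> P \<or> y \<in> P)"

definition p_ideal :: "'a::idom \<Rightarrow> 'a fract set" where
  "p_ideal f = (THE P. is_prime_ideal_in P recip_compl \<and> inverse (Fract f 1) \<notin> P
     \<and> (\<forall>Q. is_prime_ideal_in Q recip_compl \<and> inverse (Fract f 1) \<notin> Q \<and> P \<subseteq> Q \<longrightarrow> Q = P))"

definition principal_in :: "'b::comm_ring_1 \<Rightarrow> 'b set \<Rightarrow> 'b set" where
  "principal_in x R = {x * r | r. r \<in> R}"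

definition radical_in :: "'b::comm_ring_1 set \<Rightarrow> 'b set \<Rightarrow> 'b set" where
  "radical_in I R = {x \<in> R. \<exists>n::nat. x ^ n \<in> I}"

end

theory Submission
  imports Defs
begin

definition emb :: "'a::idom \<Rightarrow> 'a fract" where "emb d = Fract d 1"
definition uf :: "'a::idom \<Rightarrow> 'a fract" where "uf d = inverse (Fract d 1)"

lemma emb_add: "emb (a + b) = emb a + emb b" by (simp add: emb_def)
lemma emb_mult: "emb (a * b) = emb a * emb b" by (simp add: emb_def)
lemma emb_minus: "emb (- a) = - emb a" by (simp add: emb_def)
lemma emb_0: "emb 0 = 0" by (simp add: emb_def Zero_fract_def)
lemma emb_1: "emb 1 = 1" by (simp add: emb_def One_fract_def)
lemma emb_eq0: "emb a = 0 \<longleftrightarrow> a = 0" by (simp add: emb_def Zero_fract_def eq_fract)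
lemma emb_pow: "emb (a ^ n) = emb a ^ n" by (induction n) (simp_all add: emb_1 emb_mult)
lemma uf_emb: "uf d = inverse (emb d)" by (simp add: uf_def emb_def)
lemma uf_0: "uf 0 = 0" by (simp add: uf_emb emb_0)
lemma uf_1: "uf 1 = 1" by (simp add: uf_emb emb_1)
lemma uf_mult: "uf (a * b) = uf a * uf b" by (simp add: uf_emb emb_mult)
lemma uf_minus: "uf (- a) = - uf a" by (simp add: uf_emb emb_minus)
lemma uf_eq0: "uf a = 0 \<longleftrightarrow> a = 0" by (simp add: uf_emb emb_eq0)
lemma uf_pow: "uf (a ^ n) = uf a ^ n" by (simp add: uf_emb emb_pow power_inverse)

lemma subring_RR: "is_subring (recip_compl :: 'a::idom fract set)"
  unfolding is_subring_def recip_compl_def by auto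

lemma subring_0: "is_subring S \<Longrightarrow> 0 \<in> S"
  unfolding is_subring_def by (metis add.right_inverse)

lemma uf_RR: "uf d \<in> recip_compl"
proof (cases "d = 0")
  case True thus ?thesis using subring_0[OF subring_RR] by (simp add: uf_0)
next
  case False thus ?thesis unfolding recip_compl_def uf_def by auto
qed

definition rsum :: "'a::idom list \<Rightarrow> 'a fract" where "rsum ds = sum_list (map uf ds)"

definition pl :: "'a::idom list \<Rightarrow> 'a list \<Rightarrow> 'a list" where
  "pl xs ys = concat (map (\<lambda>x. map (\<lambda>y. x * y) ys) xs)"

lemma rsum_nil[simp]: "rsum [] = 0" by (simp add: rsum_def)
lemma rsum_cons[simp]: "rsum (d # ds) = uf d + rsum ds" by (simp add: rsum_def)
lemma rsum_append[simp]: "rsum (xs @ ys) = rsum xs + rsum ys" by (simp add: rsum_def)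
lemma rsum_neg: "rsum (map uminus xs) = - rsum xs"
  by (induction xs) (simp_all add: uf_minus)
lemma rsum_mapmult: "rsum (map (\<lambda>y. x * y) ys) = uf x * rsum ys"
  by (induction ys) (simp_all add: uf_mult algebra_simps)
lemma rsum_pl: "rsum (pl xs ys) = rsum xs * rsum ys"
  by (induction xs) (simp_all add: pl_def rsum_mapmult algebra_simps)

lemma rsum_subring: "is_subring (range (rsum :: 'a::idom list \<Rightarrow> _))"
  unfolding is_subring_def
proof (intro conjI ballI)
  show "1 \<in> range (rsum :: 'a list \<Rightarrow> _)" by (rule range_eqI[of _ _ "[1]"]) (simp add: uf_1)
  fix x y assume "x \<in> range (rsum :: 'a list \<Rightarrow> _)" "y \<in> range (rsum :: 'a list \<Rightarrow> _)"
  then obtain xs ys where xy: "x = rsum xs" "y = rsum ys" by auto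
  show "x + y \<in> range (rsum :: 'a list \<Rightarrow> _)" using xy by (metis rangeI rsum_append)
  show "- x \<in> range (rsum :: 'a list \<Rightarrow> _)" using xy by (metis rangeI rsum_neg)
  show "x * y \<in> range (rsum :: 'a list \<Rightarrow> _)" using xy by (metis rangeI rsum_pl)
qed

lemma RR_sub: "is_subring S \<Longrightarrow> (\<forall>d::'a::idom. uf d \<in> S) \<Longrightarrow> range rsum \<subseteq> S"
proof
  fix x assume S: "is_subring S" "\<forall>d::'a. uf d \<in> S" and "x \<in> range (rsum :: 'a list \<Rightarrow> _)"
  then obtain xs where "x = rsum xs" by auto
  moreover have "rsum xs \<in> S"
    by (induction xs) (use S subring_0 in \<open>auto simp: is_subring_def\<close>)
  ultimately show "x \<in> S" by simp
qed

lemma RR_eq: "(recip_compl :: 'a::idom fract set) = range rsum"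
proof
  show "(recip_compl :: 'a fract set) \<subseteq> range rsum"
    unfolding recip_compl_def using rsum_subring[where 'a='a]
    by (intro Inter_lower) (auto simp: uf_def intro!: range_eqI[of _ _ "[_]"])
  show "range rsum \<subseteq> (recip_compl :: 'a fract set)"
    using RR_sub[OF subring_RR] uf_RR by blast
qed


abbreviation RR :: "'a::idom fract set" where "RR \<equiv> recip_compl"

lemma RR_1: "1 \<in> RR" using subring_RR unfolding is_subring_def by blast
lemma RR_add: "x \<in> RR \<Longrightarrow> y \<in> RR \<Longrightarrow> x + y \<in> RR" using subring_RR unfolding is_subring_def by blast
lemma RR_mult: "x \<in> RR \<Longrightarrow> y \<in> RR \<Longrightarrow> x * y \<in> RR" using subring_RR unfolding is_subring_def by blast
lemma RR_neg: "x \<in> RR \<Longrightarrow> - x \<in> RR" using subring_RR unfolding is_subring_def by blast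
lemma RR_0: "0 \<in> RR" using subring_0[OF subring_RR] .
lemma RR_pow: "x \<in> RR \<Longrightarrow> x ^ n \<in> RR" by (induction n) (simp_all add: RR_1 RR_mult)
lemma rsum_RR: "rsum ds \<in> RR" using RR_eq by blast

definition goodP :: "'a::idom fract set \<Rightarrow> 'a \<Rightarrow> bool" where "goodP P d \<longleftrightarrow> uf d \<notin> P"

context
  fixes P :: "'a::idom fract set"
  assumes pr: "is_prime_ideal_in P RR"
begin

lemma P_sub: "P \<subseteq> RR" using pr unfolding is_prime_ideal_in_def is_ideal_in_def by blast
lemma P_0: "0 \<in> P" using pr unfolding is_prime_ideal_in_def is_ideal_in_def by blast
lemma P_add: "x \<in> P \<Longrightarrow> y \<in> P \<Longrightarrow> x + y \<in> P" using pr unfolding is_prime_ideal_in_def is_ideal_in_def by blast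
lemma P_mult: "x \<in> P \<Longrightarrow> r \<in> RR \<Longrightarrow> r * x \<in> P" using pr unfolding is_prime_ideal_in_def is_ideal_in_def by blast
lemma P_prime: "x \<in> RR \<Longrightarrow> y \<in> RR \<Longrightarrow> x * y \<in> P \<Longrightarrow> x \<in> P \<or> y \<in> P"
  using pr unfolding is_prime_ideal_in_def by blast
lemma P_neg: "x \<in> P \<Longrightarrow> - x \<in> P" using P_mult[of x "-1"] RR_neg[OF RR_1] by simp
lemma P_1: "1 \<notin> P"
proof
  assume "1 \<in> P"
  hence "RR \<subseteq> P" using P_mult[of 1] by auto
  thus False using P_sub pr unfolding is_prime_ideal_in_def by blast
qed

abbreviation good :: "'a \<Rightarrow> bool" where "good \<equiv> goodP P"
lemma good_def: "good d \<longleftrightarrow> uf d \<notin> P" by (simp add: goodP_def)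

lemma good_nz: "good d \<Longrightarrow> d \<noteq> 0" using P_0 by (auto simp: good_def uf_0)
lemma good_mult: "good (d * e) \<longleftrightarrow> good d \<and> good e"
  unfolding good_def uf_mult using P_prime[OF uf_RR uf_RR] P_mult uf_RR
  by (metis mult.commute)
lemma good_neg: "good (- d) \<longleftrightarrow> good d"
  unfolding good_def uf_minus using P_neg by fastforce
lemma good_1: "good 1" using P_1 by (simp add: good_def uf_1)
lemma good_add: assumes "good d" "good e" "d + e \<noteq> 0" shows "good (d + e)"
proof (rule ccontr)
  assume "\<not> good (d + e)"
  hence "uf (d + e) \<in> P" by (simp add: good_def)
  hence "(uf d + uf e) * uf (d + e) \<in> P" using P_mult RR_add uf_RR by blast
  moreover have "(uf d + uf e) * uf (d + e) = uf (d * e)"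
    using good_nz[OF assms(1)] good_nz[OF assms(2)] assms(3)
    by (simp add: uf_emb emb_mult emb_add emb_eq0 field_simps)
       (metis add.commute emb_add emb_eq0)
  ultimately show False using assms good_mult[of d e] unfolding good_def by simp
qed

lemma good_prod: "\<forall>a\<in>set as. good a \<Longrightarrow> good (prod_list as)"
  by (induction as) (simp_all add: good_1 good_mult)

lemma num_lemma: "\<forall>a\<in>set as. good a \<Longrightarrow>
  \<exists>N. rsum as * emb (prod_list as) = emb N \<and> (N = 0 \<or> good N)"
proof (induction as)
  case Nil thus ?case by (auto simp: emb_0 intro!: exI[of _ 0])
next
  case (Cons a as)
  then obtain N where N: "rsum as * emb (prod_list as) = emb N" "N = 0 \<or> good N" by auto
  have ga: "good a" using Cons by simp
  have gp: "good (prod_list as)" using Cons good_prod by simp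
  have "rsum (a # as) * emb (prod_list (a # as)) = emb (prod_list as + a * N)"
    using good_nz[OF ga] N(1)
    by (simp add: uf_emb emb_mult emb_add emb_eq0 field_simps)
  moreover have "prod_list as + a * N = 0 \<or> good (prod_list as + a * N)"
    using N(2) ga gp good_add good_mult by auto
  ultimately show ?case by blast
qed

lemma Zgood: assumes "\<forall>a\<in>set as. good a" "rsum as \<in> P" shows "rsum as = 0"
proof -
  obtain N where N: "rsum as * emb (prod_list as) = emb N" "N = 0 \<or> good N"
    using num_lemma[OF assms(1)] by blast
  have gp: "good (prod_list as)" using assms good_prod by simp
  have ep: "emb (prod_list as) \<noteq> 0" using good_nz[OF gp] emb_eq0 by blast
  show ?thesis
  proof (cases "N = 0")
    case True thus ?thesis using N(1) ep by (simp add: emb_0)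
  next
    case False
    hence gN: "good N" using N by simp
    have eN: "emb N \<noteq> 0" using good_nz[OF gN] emb_eq0 by blast
    have "uf N * rsum as \<in> P" using P_mult[OF assms(2) uf_RR] .
    moreover have "uf N * rsum as = uf (prod_list as)"
      using N(1) ep eN by (simp add: uf_emb field_simps)
    ultimately show ?thesis using gp by (simp add: good_def)
  qed
qed

lemma rsum_filter: "rsum xs = rsum (filter Q xs) + rsum (filter (\<lambda>x. \<not> Q x) xs)"
  by (induction xs) (simp_all add: algebra_simps)

lemma sum_P: "\<forall>a\<in>set as. uf a \<in> P \<Longrightarrow> rsum as \<in> P"
  by (induction as) (simp_all add: P_0 P_add)

lemma Z: assumes "rsum ds \<in> P" shows "rsum (filter good ds) = 0"
proof (rule Zgood)
  show "\<forall>a\<in>set (filter good ds). good a" by simp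
  have t: "rsum (filter (\<lambda>x. \<not> good x) ds) \<in> P" by (rule sum_P) (simp add: good_def)
  have "rsum (filter good ds) = rsum ds + - rsum (filter (\<lambda>x. \<not> good x) ds)"
    using rsum_filter[of ds good] by simp
  thus "rsum (filter good ds) \<in> P" using P_add[OF assms P_neg[OF t]] by simp
qed

end


lemma filt_mapmult: assumes "\<And>a b. g (a * b) = (g a \<and> g b)"
  shows "rsum (filter g (map (\<lambda>y. x * y) ys)) = (if g x then uf x * rsum (filter g ys) else 0)"
  by (induction ys) (auto simp: assms uf_mult algebra_simps)

lemma filt_pl: assumes "\<And>a b. g (a * b) = (g a \<and> g b)"
  shows "rsum (filter g (pl xs ys)) = rsum (filter g xs) * rsum (filter g ys)"
  by (induction xs) (simp_all add: pl_def filt_mapmult[OF assms] algebra_simps)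

definition g12P :: "'a::idom fract set \<Rightarrow> 'a fract set \<Rightarrow> 'a \<Rightarrow> bool" where
  "g12P P1 P2 d \<longleftrightarrow> goodP P1 d \<and> goodP P2 d"
definition hP :: "'a::idom fract set \<Rightarrow> 'a fract set \<Rightarrow> 'a list \<Rightarrow> 'a fract" where
  "hP P1 P2 ds = rsum (filter (g12P P1 P2) ds)"
definition QsP :: "'a::idom fract set \<Rightarrow> 'a fract set \<Rightarrow> 'a fract set" where
  "QsP P1 P2 = {x \<in> RR. \<exists>ds. x = rsum ds \<and> hP P1 P2 ds = 0}"

context
  fixes P1 P2 :: "'a::idom fract set"
  assumes pr1: "is_prime_ideal_in P1 RR" and pr2: "is_prime_ideal_in P2 RR"
begin

abbreviation g12 where "g12 \<equiv> g12P P1 P2"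
abbreviation h where "h \<equiv> hP P1 P2"
lemma g12_def: "g12 = (\<lambda>d. goodP P1 d \<and> goodP P2 d)" by (simp add: g12P_def fun_eq_iff)
lemma h_def: "h ds = rsum (filter g12 ds)" by (simp add: hP_def)

lemma g12_mult: "g12 (a * b) = (g12 a \<and> g12 b)"
  unfolding g12_def using good_mult[OF pr1] good_mult[OF pr2] by blast

lemma h_append: "h (xs @ ys) = h xs + h ys" by (simp add: h_def)
lemma h_pl: "h (pl xs ys) = h xs * h ys" by (simp add: h_def filt_pl[OF g12_mult])
lemma h_neg: "h (map uminus xs) = - h xs"
proof -
  have "filter g12 (map uminus xs) = map uminus (filter g12 xs)"
    by (induction xs) (auto simp: g12_def good_neg[OF pr1] good_neg[OF pr2])
  thus ?thesis by (simp add: h_def rsum_neg)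
qed

lemma h_zero: assumes "rsum ds = 0" shows "h ds = 0"
proof -
  have "rsum (filter (goodP P1) ds) = 0" using Z[OF pr1] assms P_0[OF pr1] by simp
  hence A: "rsum (filter (goodP P2) (filter (goodP P1) ds)) = 0"
    using Z[OF pr2, of "filter (goodP P1) ds"] P_0[OF pr2] by (simp only:)
  have "filter (goodP P2) (filter (goodP P1) ds) = filter g12 ds"
    by (simp add: g12_def conj_commute)
  thus ?thesis using A by (simp only: h_def)
qed

lemma h_wd: assumes "rsum ds = rsum es" shows "h ds = h es"
proof -
  have "rsum (ds @ map uminus es) = 0" using assms by (simp add: rsum_neg)
  hence "h (ds @ map uminus es) = 0" by (rule h_zero)
  thus ?thesis by (simp add: h_append h_neg)
qed

abbreviation Qs where "Qs \<equiv> QsP P1 P2"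
lemma Qs_def: "Qs = {x \<in> RR. \<exists>ds. x = rsum ds \<and> h ds = 0}" by (simp add: QsP_def)

lemma memQ: assumes "x = rsum ds" shows "x \<in> Qs \<longleftrightarrow> h ds = 0"
proof
  assume "x \<in> Qs"
  then obtain es where "x = rsum es" "h es = 0" unfolding Qs_def by blast
  thus "h ds = 0" using h_wd[of ds es] assms by simp
next
  assume "h ds = 0" thus "x \<in> Qs" using assms rsum_RR unfolding Qs_def by blast
qed

lemma RR_rep: "x \<in> RR \<Longrightarrow> \<exists>ds. x = rsum ds" using RR_eq by blast

lemma Q_prime: "is_prime_ideal_in Qs RR"
  unfolding is_prime_ideal_in_def is_ideal_in_def
proof (intro conjI ballI impI)
  show "Qs \<subseteq> RR" by (auto simp: Qs_def)
  show "0 \<in> Qs" using memQ[of 0 "[]"] by (simp add: h_def)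
  fix x y assume "x \<in> Qs" "y \<in> Qs"
  then obtain xs ys where "x = rsum xs" "y = rsum ys" "h xs = 0" "h ys = 0" by (auto simp: Qs_def)
  thus "x + y \<in> Qs" using memQ[of "x + y" "xs @ ys"] by (simp add: h_append)
next
  fix x r :: "'a fract" assume "x \<in> Qs" "r \<in> RR"
  then obtain xs rs where "x = rsum xs" "r = rsum rs" "h xs = 0" using RR_rep[of r] unfolding Qs_def by blast
  thus "r * x \<in> Qs" using memQ[of "r * x" "pl rs xs"] by (simp add: h_pl rsum_pl)
next
  have "1 \<notin> Qs" using memQ[of 1 "[1]"] good_1[OF pr1] good_1[OF pr2]
    by (simp add: h_def g12_def uf_1)
  thus "Qs \<noteq> RR" using RR_1 by blast
next
  fix x y assume "x \<in> RR" "y \<in> RR" "x * y \<in> Qs"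
  then obtain xs ys where xy: "x = rsum xs" "y = rsum ys" by (metis RR_rep)
  hence "h (pl xs ys) = 0" using memQ[of "x * y" "pl xs ys"] \<open>x * y \<in> Qs\<close> by (simp add: rsum_pl)
  hence "h xs = 0 \<or> h ys = 0" by (simp add: h_pl)
  thus "x \<in> Qs \<or> y \<in> Qs" using memQ xy by blast
qed

lemma P1_Q: "P1 \<subseteq> Qs"
proof
  fix x assume x: "x \<in> P1"
  then obtain ds where ds: "x = rsum ds" using P_sub[OF pr1] by (auto dest: RR_rep)
  have "rsum (filter (goodP P1) ds) = 0" using Z[OF pr1] x ds by simp
  hence A: "rsum (filter (goodP P2) (filter (goodP P1) ds)) = 0"
    using Z[OF pr2, of "filter (goodP P1) ds"] P_0[OF pr2] by (simp only:)
  have "filter (goodP P2) (filter (goodP P1) ds) = filter g12 ds"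
    by (simp add: g12_def conj_commute)
  hence "h ds = 0" using A by (simp only: h_def)
  thus "x \<in> Qs" using memQ[OF ds] by simp
qed

lemma P2_Q: "P2 \<subseteq> Qs"
proof
  fix x assume x: "x \<in> P2"
  then obtain ds where ds: "x = rsum ds" using P_sub[OF pr2] by (auto dest: RR_rep)
  have "rsum (filter (goodP P2) ds) = 0" using Z[OF pr2] x ds by simp
  hence A: "rsum (filter (goodP P1) (filter (goodP P2) ds)) = 0"
    using Z[OF pr1, of "filter (goodP P2) ds"] P_0[OF pr1] by (simp only:)
  have "filter (goodP P1) (filter (goodP P2) ds) = filter g12 ds"
    by (simp add: g12_def conj_commute)
  hence "h ds = 0" using A by (simp only: h_def)
  thus "x \<in> Qs" using memQ[OF ds] by simp
qed

lemma f_Q: assumes "uf f \<notin> P1" "uf f \<notin> P2" shows "uf f \<notin> Qs"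
proof -
  have g: "g12 f" using assms by (simp add: g12_def goodP_def)
  have "h [f] = uf f" using g by (simp add: h_def)
  moreover have "uf f \<noteq> 0" using assms P_0[OF pr1] by auto
  ultimately show ?thesis using memQ[of "uf f" "[f]"] by simp
qed

end


definition Uf :: "'a::idom \<Rightarrow> 'a fract set" where
  "Uf f = \<Union>{P. is_prime_ideal_in P RR \<and> uf f \<notin> P}"

lemma zero_prime: "is_prime_ideal_in {0} (RR :: 'a::idom fract set)"
proof -
  have "(1::'a fract) \<in> RR" "(1::'a fract) \<notin> {0}" using RR_1 by auto
  hence "{0} \<noteq> (RR :: 'a fract set)" by blast
  thus ?thesis unfolding is_prime_ideal_in_def is_ideal_in_def using RR_0 by auto
qed

lemma U_max: "is_prime_ideal_in P RR \<Longrightarrow> uf f \<notin> P \<Longrightarrow> P \<subseteq> Uf f"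
  unfolding Uf_def by blast

lemma uf_U: "uf f \<notin> Uf f" unfolding Uf_def by blast

lemma U_prime: assumes "f \<noteq> 0" shows "is_prime_ideal_in (Uf f) RR"
  unfolding is_prime_ideal_in_def is_ideal_in_def
proof (intro conjI ballI impI)
  show "Uf f \<subseteq> RR" unfolding Uf_def using P_sub by blast
  have "{0} \<subseteq> Uf f" using U_max[OF zero_prime] assms uf_eq0 by blast
  thus "0 \<in> Uf f" by blast
  show "Uf f \<noteq> RR" using P_1 RR_1 unfolding Uf_def by blast
next
  fix x y assume "x \<in> Uf f" "y \<in> Uf f"
  then obtain P1 P2 where P: "is_prime_ideal_in P1 RR" "uf f \<notin> P1" "x \<in> P1"
     "is_prime_ideal_in P2 RR" "uf f \<notin> P2" "y \<in> P2" unfolding Uf_def by blast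
  have "x \<in> QsP P1 P2" "y \<in> QsP P1 P2" using P1_Q[OF P(1,4)] P2_Q[OF P(1,4)] P by auto
  hence "x + y \<in> QsP P1 P2" using P_add[OF Q_prime[OF P(1,4)]] by blast
  thus "x + y \<in> Uf f" using U_max[OF Q_prime[OF P(1,4)] f_Q[OF P(1,4) P(2,5)]] by blast
next
  fix x r :: "'a fract" assume "x \<in> Uf f" "r \<in> RR"
  thus "r * x \<in> Uf f" unfolding Uf_def using P_mult by blast
next
  fix x y assume "x \<in> RR" "y \<in> RR" "x * y \<in> Uf f"
  thus "x \<in> Uf f \<or> y \<in> Uf f" unfolding Uf_def using P_prime by blast
qed

lemma p_ideal_eq: assumes "f \<noteq> 0" shows "p_ideal f = Uf f"
  unfolding p_ideal_def uf_def[symmetric]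
proof (rule the_equality)
  show "is_prime_ideal_in (Uf f) RR \<and> uf f \<notin> Uf f \<and>
    (\<forall>Q. is_prime_ideal_in Q RR \<and> uf f \<notin> Q \<and> Uf f \<subseteq> Q \<longrightarrow> Q = Uf f)"
    using U_prime[OF assms] uf_U U_max by blast
  fix P assume "is_prime_ideal_in P RR \<and> uf f \<notin> P \<and>
    (\<forall>Q. is_prime_ideal_in Q RR \<and> uf f \<notin> Q \<and> P \<subseteq> Q \<longrightarrow> Q = P)"
  thus "P = Uf f" using U_prime[OF assms] uf_U U_max by blast
qed


lemma ideal_J: fixes M :: "'a::idom fract set" assumes "is_ideal_in M RR" "x \<in> RR"
  shows "is_ideal_in {m + x * r | m r. m \<in> M \<and> r \<in> RR} RR"
  using assms unfolding is_ideal_in_def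
proof (intro conjI ballI)
  let ?J = "{m + x * r | m r. m \<in> M \<and> r \<in> RR}"
  have M: "M \<subseteq> RR" "0 \<in> M" "\<forall>a\<in>M. \<forall>b\<in>M. a + b \<in> M" "\<forall>a\<in>M. \<forall>r\<in>RR. r * a \<in> M"
    using assms(1) unfolding is_ideal_in_def by auto
  show "?J \<subseteq> RR" using M(1) assms(2) RR_add RR_mult by blast
  show "0 \<in> ?J" using M(2) RR_0 by (auto intro!: exI[of _ 0])
  fix a b assume "a \<in> ?J" "b \<in> ?J"
  then obtain m1 r1 m2 r2 where "a = m1 + x * r1" "b = m2 + x * r2" "m1 \<in> M" "r1 \<in> RR" "m2 \<in> M" "r2 \<in> RR"
    by blast
  moreover have "m1 + x * r1 + (m2 + x * r2) = (m1 + m2) + x * (r1 + r2)" by (simp add: algebra_simps)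
  ultimately show "a + b \<in> ?J" using M(3) RR_add by blast
next
  let ?J = "{m + x * r | m r. m \<in> M \<and> r \<in> RR}"
  have M: "M \<subseteq> RR" "0 \<in> M" "\<forall>a\<in>M. \<forall>b\<in>M. a + b \<in> M" "\<forall>a\<in>M. \<forall>r\<in>RR. r * a \<in> M"
    using assms(1) unfolding is_ideal_in_def by auto
  fix a s :: "'a fract" assume "a \<in> ?J" "s \<in> RR"
  then obtain m r where "a = m + x * r" "m \<in> M" "r \<in> RR" by blast
  moreover have "s * (m + x * r) = s * m + x * (s * r)" by (simp add: algebra_simps)
  ultimately show "s * a \<in> ?J" using M(4) RR_mult \<open>s \<in> RR\<close> by blast
qed

lemma principal_ideal: assumes "a \<in> RR" shows "is_ideal_in (principal_in a RR) RR"
  unfolding is_ideal_in_def principal_in_def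
proof (intro conjI ballI)
  show "{a * r |r. r \<in> RR} \<subseteq> RR" using RR_mult assms by blast
  show "0 \<in> {a * r |r. r \<in> RR}" using RR_0 by (auto intro!: exI[of _ 0])
  fix x y :: "'a fract" assume "x \<in> {a * r |r. r \<in> RR}" "y \<in> {a * r |r. r \<in> RR}"
  then obtain r s where "x = a * r" "y = a * s" "r \<in> RR" "s \<in> RR" by blast
  thus "x + y \<in> {a * r |r. r \<in> RR}" using RR_add by (auto simp: algebra_simps intro!: exI[of _ "r + s"])
next
  fix x t :: "'a fract" assume "x \<in> {a * r |r. r \<in> RR}" "t \<in> RR"
  then obtain r where "x = a * r" "r \<in> RR" by blast
  thus "t * x \<in> {a * r |r. r \<in> RR}" using RR_mult \<open>t \<in> RR\<close> by (auto simp: algebra_simps intro!: exI[of _ "t * r"])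
qed

lemma exists_prime:
  fixes f g :: "'a::idom"
  assumes "\<forall>n. uf g ^ n \<notin> principal_in (uf f) RR"
  shows "\<exists>P. is_prime_ideal_in P RR \<and> uf f \<in> P \<and> uf g \<notin> P"
proof -
  define A where "A = {I. is_ideal_in I RR \<and> uf f \<in> I \<and> (\<forall>n. uf g ^ n \<notin> I)}"
  have "principal_in (uf f) RR \<in> A"
    unfolding A_def using principal_ideal[of "uf f"] uf_RR RR_1 assms
    by (auto simp: principal_in_def intro!: exI[of _ 1])
  hence "A \<noteq> {}" by blast
  moreover have "\<Union>C \<in> A" if C: "C \<noteq> {}" "subset.chain A C" for C
  proof -
    have CA: "C \<subseteq> A" and ch: "\<forall>X\<in>C. \<forall>Y\<in>C. X \<subseteq> Y \<or> Y \<subseteq> X" using C(2) by (auto simp: subset_chain_def)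
    obtain I0 where I0: "I0 \<in> C" using C(1) by blast
    have "is_ideal_in (\<Union>C) RR" unfolding is_ideal_in_def
    proof (intro conjI ballI)
      show "\<Union>C \<subseteq> RR" using CA unfolding A_def is_ideal_in_def by blast
      show "0 \<in> \<Union>C" using CA I0 unfolding A_def is_ideal_in_def by blast
      fix x y :: "'a fract" assume "x \<in> \<Union>C" "y \<in> \<Union>C"
      then obtain X Y where XY: "X \<in> C" "Y \<in> C" "x \<in> X" "y \<in> Y" by blast
      show "x + y \<in> \<Union>C"
      proof (cases "X \<subseteq> Y")
        case True thus ?thesis using XY CA unfolding A_def is_ideal_in_def by blast
      next
        case False hence "Y \<subseteq> X" using ch XY by blast
        thus ?thesis using XY CA unfolding A_def is_ideal_in_def by blast
      qed
    next
      fix x r :: "'a fract" assume "x \<in> \<Union>C" "r \<in> RR"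
      thus "r * x \<in> \<Union>C" using CA unfolding A_def is_ideal_in_def by blast
    qed
    moreover have "uf f \<in> \<Union>C" using CA I0 unfolding A_def by blast
    moreover have "\<forall>n. uf g ^ n \<notin> \<Union>C" using CA unfolding A_def by blast
    ultimately show ?thesis unfolding A_def by blast
  qed
  ultimately obtain M where M: "M \<in> A" "\<forall>X\<in>A. M \<subseteq> X \<longrightarrow> X = M"
    using subset_Zorn_nonempty[of A] by blast
  have Mi: "is_ideal_in M RR" "uf f \<in> M" "\<And>n. uf g ^ n \<notin> M" using M(1) unfolding A_def by auto
  have Ms: "M \<subseteq> RR" "\<And>a b. a \<in> M \<Longrightarrow> b \<in> M \<Longrightarrow> a + b \<in> M" "\<And>a r. a \<in> M \<Longrightarrow> r \<in> RR \<Longrightarrow> r * a \<in> M"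
    using Mi(1) unfolding is_ideal_in_def by auto
  have escape: "\<exists>n m r. m \<in> M \<and> r \<in> RR \<and> uf g ^ n = m + x * r" if x: "x \<in> RR" "x \<notin> M" for x
  proof (rule ccontr)
    assume na: "\<not> ?thesis"
    let ?J = "{m + x * r | m r. m \<in> M \<and> r \<in> RR}"
    have J1: "is_ideal_in ?J RR" by (rule ideal_J[OF Mi(1) x(1)])
    have "uf f + x * 0 \<in> ?J" using Mi(2) RR_0 by blast
    hence J2: "uf f \<in> ?J" by simp
    have J3: "\<forall>n. uf g ^ n \<notin> ?J" using na by blast
    have "?J \<in> A" unfolding A_def using J1 J2 J3 by blast
    moreover have "M \<subseteq> ?J"
    proof
      fix m assume "m \<in> M" hence "m + x * 0 \<in> ?J" using RR_0 by blast
      thus "m \<in> ?J" by simp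
    qed
    ultimately have "?J = M" using M(2) by blast
    moreover have "x \<in> ?J"
    proof -
      have "0 + x * 1 \<in> ?J" using Mi(1) RR_1 unfolding is_ideal_in_def by blast
      thus ?thesis by simp
    qed
    ultimately show False using x by blast
  qed
  have "is_prime_ideal_in M RR" unfolding is_prime_ideal_in_def
  proof (intro conjI ballI impI)
    show "is_ideal_in M RR" by (rule Mi(1))
    show "M \<noteq> RR" using Mi(3)[of 0] RR_1 by auto
    fix x y :: "'a fract" assume xy: "x \<in> RR" "y \<in> RR" "x * y \<in> M"
    show "x \<in> M \<or> y \<in> M"
    proof (rule ccontr)
      assume "\<not> (x \<in> M \<or> y \<in> M)"
      then obtain a m1 r1 b m2 r2 where e: "m1 \<in> M" "r1 \<in> RR" "uf g ^ a = m1 + x * r1"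
        "m2 \<in> M" "r2 \<in> RR" "uf g ^ b = m2 + y * r2"
        using escape xy by meson
      have "uf g ^ (a + b) = (m1 + x * r1) * (m2 + y * r2)" using e by (simp add: power_add)
      also have "\<dots> = (m1 * m2 + (x * r1) * m2 + (y * r2) * m1) + (r1 * r2) * (x * y)"
        by (simp add: algebra_simps)
      also have "\<dots> \<in> M"
        using e xy Ms RR_mult by (meson subsetD)
      finally show False using Mi(3) by blast
    qed
  qed
  moreover have "uf g \<notin> M" using Mi(3)[of 1] by simp
  ultimately show ?thesis using Mi(2) by blast
qed


lemma prime_pow: assumes "is_prime_ideal_in P RR" "x \<in> RR" "x ^ n \<in> P" shows "x \<in> P"
  using assms(3)
proof (induction n)
  case 0 thus ?case using P_1[OF assms(1)] by simp
next
  case (Suc n)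
  hence "x \<in> P \<or> x ^ n \<in> P" using P_prime[OF assms(1) assms(2) RR_pow[OF assms(2)]] by simp
  thus ?case using Suc by blast
qed

lemma C_from_any: assumes "uf g ^ n \<in> principal_in (uf f) RR"
  shows "\<exists>e::nat. e \<ge> 1 \<and> uf g ^ e \<in> principal_in (uf f) RR"
proof (cases "n = 0")
  case True
  then obtain r where r: "1 = uf f * r" "r \<in> RR" using assms by (auto simp: principal_in_def)
  hence "uf g ^ 1 = uf f * (r * uf g)" by (simp add: algebra_simps)
  moreover have "r * uf g \<in> RR" using r RR_mult uf_RR by blast
  ultimately have "uf g ^ 1 \<in> principal_in (uf f) RR" unfolding principal_in_def by blast
  thus ?thesis by blast
next
  case False thus ?thesis using assms by (intro exI[of _ n]) simp
qed

theorem mainTheorem10: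
  fixes f g :: "'a::idom"
  assumes "f \<noteq> 0" and "g \<noteq> 0"
  shows "(p_ideal g \<subseteq> p_ideal f
           \<longleftrightarrow> radical_in (principal_in (inverse (Fract g 1)) recip_compl) recip_compl
               \<subseteq> radical_in (principal_in (inverse (Fract f 1)) recip_compl) recip_compl)
       \<and> (radical_in (principal_in (inverse (Fract g 1)) recip_compl) recip_compl
               \<subseteq> radical_in (principal_in (inverse (Fract f 1)) recip_compl) recip_compl
           \<longleftrightarrow> (\<exists>e::nat. e \<ge> 1 \<and> inverse (Fract (g ^ e) 1)
                  \<in> principal_in (inverse (Fract f 1)) recip_compl))"
proof -
  have pf: "p_ideal f = Uf f" and pg: "p_ideal g = Uf g" using p_ideal_eq assms by auto
  have ufp: "inverse (Fract (g ^ e) 1) = uf g ^ e" for e using uf_pow[of g e] by (simp only: uf_def)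
  let ?C = "\<exists>e::nat. e \<ge> 1 \<and> uf g ^ e \<in> principal_in (uf f) RR"
  let ?B = "radical_in (principal_in (uf g) RR) RR \<subseteq> radical_in (principal_in (uf f) RR) RR"
  have AC: "Uf g \<subseteq> Uf f \<longleftrightarrow> ?C"
  proof
    assume C: ?C
    then obtain e r where e: "e \<ge> 1" "uf g ^ e = uf f * r" "r \<in> RR" by (auto simp: principal_in_def)
    have "uf f \<notin> Uf g"
    proof
      assume "uf f \<in> Uf g"
      hence "r * uf f \<in> Uf g" using P_mult[OF U_prime[OF assms(2)]] e(3) by blast
      hence "uf g ^ e \<in> Uf g" using e(2) by (simp add: mult.commute)
      hence "uf g \<in> Uf g" using prime_pow[OF U_prime[OF assms(2)] uf_RR] by blast
      thus False using uf_U by blast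
    qed
    thus "Uf g \<subseteq> Uf f" using U_max[OF U_prime[OF assms(2)]] by blast
  next
    assume sub: "Uf g \<subseteq> Uf f"
    show ?C
    proof (rule ccontr)
      assume nC: "\<not> ?C"
      have "\<forall>n. uf g ^ n \<notin> principal_in (uf f) RR" using C_from_any nC by blast
      then obtain P where P: "is_prime_ideal_in P RR" "uf f \<in> P" "uf g \<notin> P"
        using exists_prime by blast
      have "P \<subseteq> Uf g" using U_max[OF P(1) P(3)] .
      thus False using sub P(2) uf_U by blast
    qed
  qed
  have BC: "?B \<longleftrightarrow> ?C"
  proof
    assume B: ?B
    have "uf g ^ 1 = uf g * 1" by simp
    hence "uf g \<in> radical_in (principal_in (uf g) RR) RR"
      unfolding radical_in_def principal_in_def using uf_RR RR_1 by blast
    hence "uf g \<in> radical_in (principal_in (uf f) RR) RR" using B by blast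
    then obtain n where "uf g ^ n \<in> principal_in (uf f) RR" unfolding radical_in_def by blast
    thus ?C by (rule C_from_any)
  next
    assume ?C
    then obtain e s where e: "e \<ge> 1" "uf g ^ e = uf f * s" "s \<in> RR" by (auto simp: principal_in_def)
    show ?B
    proof
      fix x assume "x \<in> radical_in (principal_in (uf g) RR) RR"
      then obtain n r where x: "x \<in> RR" "x ^ n = uf g * r" "r \<in> RR"
        unfolding radical_in_def principal_in_def by blast
      have "x ^ (n * e) = uf f * (s * r ^ e)"
        using x e by (simp add: power_mult power_mult_distrib mult.assoc)
      moreover have "s * r ^ e \<in> RR" using e(3) x(3) RR_mult RR_pow by blast
      ultimately show "x \<in> radical_in (principal_in (uf f) RR) RR"
        unfolding radical_in_def principal_in_def using x(1) by blast
    qed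
  qed
  show ?thesis unfolding pf pg uf_def[symmetric] uf_pow using AC BC by blast
qed

end
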